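(* Let $m,n$ be positive integers. The $m\times n$ matrices $B_{1,1},\dots,B_{m,n-1}$ (that is, $B_{i,j}$ for $i\in[m]$, $j\in[n-1]$) together with $C_n$ are linearly independent.
   Context: For $i\in[m]$ and $j\in[n-1]$, $B_{i,j}$ is the $m\times n$ $(0,1)$-matrix whose $(i,j)$ entry is $1$, whose $(j+1)$-th column has all entries equal to $1$ except the $(i,j+1)$ entry which is $0$, and all of whose other entries are $0$. $C_n$ is the $m\times n$ $(0,1)$-matrix whose $n$-th column is all $1$'s and all other entries $0$. *)

theory Defs
  imports Complex_Main
begin

text \<open>An m x n matrix is represented as a function on 1-based indices
  (row r in {1..m}, column s in {1..n}); entries outside are irrelevant.\<close>

definition Bmat :: "nat \<Rightarrow> nat \<Rightarrow> nat \<Rightarrow> nat \<Rightarrow> real" where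
  "Bmat i j r s = (if r = i \<and> s = j then 1
                   else if s = j + 1 \<and> r \<noteq> i then 1 else 0)"

definition Cmat :: "nat \<Rightarrow> nat \<Rightarrow> nat \<Rightarrow> real" where
  "Cmat n r s = (if s = n then 1 else 0)"

end

theory Submission
  imports Defs
begin

lemma inner_sum:
  assumes "s \<ge> 1" "s \<le> n"
  shows "(\<Sum>j=1..n-1. a i j * Bmat i j r s) =
    (if i = r \<and> s \<le> n-1 then a i s else 0) + (if i \<noteq> r \<and> 2 \<le> s then a i (s-1) else 0)"
proof -
  have "\<And>j. j \<in> {1..n-1} \<Longrightarrow> a i j * Bmat i j r s = (if j = s then (if i = r then a i j else 0) else 0)
         + (if j = s - 1 then (if i \<noteq> r \<and> 2 \<le> s then a i j else 0) else 0)"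
    using assms by (auto simp: Bmat_def)
  note P = this
  have "(\<Sum>j=1..n-1. a i j * Bmat i j r s) =
     (\<Sum>j=1..n-1. (if j = s then (if i = r then a i j else 0) else 0))
     + (\<Sum>j=1..n-1. (if j = s - 1 then (if i \<noteq> r \<and> 2 \<le> s then a i j else 0) else 0))"
    unfolding sum.distrib[symmetric] by (rule sum.cong[OF refl P])
  also have "(\<Sum>j=1..n-1. (if j = s then (if i = r then a i j else 0) else 0))
      = (if i = r \<and> s \<le> n-1 then a i s else 0)"
    using assms by (simp only: sum.delta finite_atLeastAtMost) auto
  also have "(\<Sum>j=1..n-1. (if j = s - 1 then (if i \<noteq> r \<and> 2 \<le> s then a i j else 0) else 0))
      = (if i \<noteq> r \<and> 2 \<le> s then a i (s-1) else 0)"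
    using assms by (simp only: sum.delta finite_atLeastAtMost) auto
  finally show ?thesis .
qed

lemma entry:
  assumes "s \<ge> 1" "s \<le> n" "r \<in> {1..m}"
  shows "(\<Sum>i=1..m. \<Sum>j=1..n-1. a i j * Bmat i j r s) =
    (if s \<le> n-1 then a r s else 0) + (if 2 \<le> s then (\<Sum>i\<in>{1..m}-{r}. a i (s-1)) else 0)"
proof -
  have "(\<Sum>i=1..m. \<Sum>j=1..n-1. a i j * Bmat i j r s) =
     (\<Sum>i=1..m. (if i = r \<and> s \<le> n-1 then a i s else 0) + (if i \<noteq> r \<and> 2 \<le> s then a i (s-1) else 0))"
    by (rule sum.cong[OF refl], rule inner_sum[OF assms(1,2)])
  also have "\<dots> = (\<Sum>i=1..m. (if i = r then (if s \<le> n-1 then a i s else 0) else 0))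
     + (\<Sum>i=1..m. (if i \<noteq> r \<and> 2 \<le> s then a i (s-1) else 0))"
    unfolding sum.distrib[symmetric] by (rule sum.cong) auto
  also have "(\<Sum>i=1..m. (if i = r then (if s \<le> n-1 then a i s else 0) else 0))
     = (if s \<le> n-1 then a r s else 0)" using assms by (simp only: sum.delta finite_atLeastAtMost) auto
  also have "(\<Sum>i=1..m. (if i \<noteq> r \<and> 2 \<le> s then a i (s-1) else 0)) =
      (if 2 \<le> s then (\<Sum>i\<in>{1..m}-{r}. a i (s-1)) else 0)"
  proof (cases "2 \<le> s")
    case True
    have "(\<Sum>i=1..m. (if i \<noteq> r \<and> 2 \<le> s then a i (s-1) else 0)) = (\<Sum>i=1..m. (if i \<in> {1..m}-{r} then a i (s-1) else 0))"
      using True by (intro sum.cong) auto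
    also have "\<dots> = (\<Sum>i\<in>{1..m}-{r}. a i (s-1))"
      by (subst sum.If_cases) (auto intro: sum.cong)
    finally show ?thesis using True by simp
  qed simp
  finally show ?thesis .
qed

theorem mainTheorem7:
  fixes m n :: nat and a :: "nat \<Rightarrow> nat \<Rightarrow> real" and c :: real
  assumes "1 \<le> m" and "1 \<le> n"
    and "\<forall>r\<in>{1..m}. \<forall>s\<in>{1..n}.
           (\<Sum>i=1..m. \<Sum>j=1..n-1. a i j * Bmat i j r s) + c * Cmat n r s = 0"
  shows "(\<forall>i\<in>{1..m}. \<forall>j\<in>{1..n-1}. a i j = 0) \<and> c = 0"
proof -
  have E: "\<And>r s. r \<in> {1..m} \<Longrightarrow> 1 \<le> s \<Longrightarrow> s \<le> n \<Longrightarrow>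
     (if s \<le> n-1 then a r s else 0) + (if 2 \<le> s then (\<Sum>i\<in>{1..m}-{r}. a i (s-1)) else 0)
      + c * (if s = n then 1 else 0) = 0"
  proof -
    fix r s assume h: "r \<in> {1..m}" "1 \<le> s" "s \<le> n"
    have "(\<Sum>i=1..m. \<Sum>j=1..n-1. a i j * Bmat i j r s) + c * Cmat n r s = 0" using assms(3) h by auto
    then show "?thesis r s" unfolding entry[OF h(2,3) h(1), of a] Cmat_def by assumption
  qed
  have A: "\<forall>r\<in>{1..m}. a r s = 0" if "1 \<le> s" "s \<le> n-1" for s
    using that
  proof (induction s)
    case 0 then show ?case by simp
  next
    case (Suc t)
    show ?case
    proof
      fix r assume r: "r \<in> {1..m}"
      show "a r (Suc t) = 0"
      proof (cases "t = 0")
        case True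
        have "Suc 0 \<le> n" "Suc 0 \<noteq> n" using Suc.prems by auto
        then show ?thesis using E[OF r, of "Suc t"] True by (simp split: if_splits)
      next
        case False
        then have "\<forall>r\<in>{1..m}. a r t = 0" using Suc by simp
        then have "(\<Sum>i\<in>{1..m}-{r}. a i t) = 0" by (intro sum.neutral) auto
        moreover have "Suc t \<le> n" "Suc t \<noteq> n" using Suc.prems by auto
        ultimately show ?thesis using E[OF r, of "Suc t"] False by (simp split: if_splits)
      qed
    qed
  qed
  have "c = 0"
  proof (cases "n = 1")
    case True
    then show ?thesis using E[of 1 1] assms(1) by simp
  next
    case False
    have "\<forall>r\<in>{1..m}. a r (n-1) = 0" using A[of "n-1"] False assms(2) by simp
    then have "(\<Sum>i\<in>{1..m}-{1}. a i (n-1)) = 0" by (intro sum.neutral) auto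
    then show ?thesis using E[of 1 n] assms(1,2) False by (simp split: if_splits)
  qed
  then show ?thesis using A by auto
qed

end
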